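(* Let $T$ be an automorphism (not necessarily ergodic) of a standard probability space $(X,\mathcal B,\mu)$ and let $P\in QF(T,\mu)$ be a quasi-factor. Then the system $(M(X),P,T_* )$ is isomorphic to the factor of $(X^{\mathbb Z},\overline P^\infty,T^\infty)$ determined by the $\sigma$-algebra of symmetric sets (sets invariant under all finite permutations of coordinates).
   Context: $M(X)$ is the set of Borel probability measures on $X$ with the standard Borel structure generated by $\nu\mapsto\nu(A)$, $A\in\mathcal B$; $T$ acts on $M(X)$ by $T_*\nu=\nu\circ T^{-1}$. A quasi-factor of $(X,\mathcal B,\mu,T)$ is a probability measure $P$ on $M(X)$ invariant under $T_*$ whose barycenter $\int_{M(X)}\nu\,dP(\nu)$ equals $\mu$; $QF(T,\mu)$ is the set of these. $T^\infty$ is the diagonal action $(x_n)_n\mapsto(Tx_n)_n$ on $X^{\mathbb Z}$, and $\overline P^\infty=\int_{M(X)}\theta^{\otimes\mathbb Z}\,dP(\theta)$. *)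

theory Defs
  imports "HOL-Probability.Probability"
begin

text \<open>Standard Borel space: Borel-isomorphic to a Borel subset of the real line
  (equivalently, to a Borel subset of a Polish space).\<close>
definition standard_borel :: "'a measure \<Rightarrow> bool" where
  "standard_borel M \<longleftrightarrow>
     (\<exists>B f g. B \<in> sets (borel :: real measure) \<and>
        f \<in> M \<rightarrow>\<^sub>M restrict_space borel B \<and>
        g \<in> restrict_space borel B \<rightarrow>\<^sub>M M \<and>
        (\<forall>x\<in>space M. g (f x) = x) \<and> (\<forall>y\<in>B. f (g y) = y))"

definition standard_prob_space :: "'a measure \<Rightarrow> bool" where
  "standard_prob_space M \<longleftrightarrow> prob_space M \<and> standard_borel M"

definition automorphism :: "'a measure \<Rightarrow> ('a \<Rightarrow> 'a) \<Rightarrow> bool" where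
  "automorphism M T \<longleftrightarrow>
     bij_betw T (space M) (space M) \<and>
     T \<in> M \<rightarrow>\<^sub>M M \<and> the_inv_into (space M) T \<in> M \<rightarrow>\<^sub>M M \<and>
     distr M M T = M"

definition push :: "'a measure \<Rightarrow> ('a \<Rightarrow> 'a) \<Rightarrow> 'a measure \<Rightarrow> 'a measure" where
  "push M T \<nu> = distr \<nu> M T"

definition QF :: "'a measure \<Rightarrow> ('a \<Rightarrow> 'a) \<Rightarrow> 'a measure measure set" where
  "QF M T = {P. prob_space P \<and> sets P = sets (prob_algebra M) \<and>
     distr P (prob_algebra M) (push M T) = P \<and>
     (\<forall>A\<in>sets M. (\<integral>\<^sup>+\<nu>. emeasure \<nu> A \<partial>P) = emeasure M A)}"

abbreviation Zpow :: "'a measure \<Rightarrow> (int \<Rightarrow> 'a) measure" where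
  "Zpow M \<equiv> PiM (UNIV :: int set) (\<lambda>_. M)"

definition Tinf :: "('a \<Rightarrow> 'a) \<Rightarrow> (int \<Rightarrow> 'a) \<Rightarrow> (int \<Rightarrow> 'a)" where
  "Tinf T x = (\<lambda>n. T (x n))"

definition Pbar_inf :: "'a measure \<Rightarrow> 'a measure measure \<Rightarrow> (int \<Rightarrow> 'a) measure" where
  "Pbar_inf M P = measure_of (space (Zpow M)) (sets (Zpow M))
     (\<lambda>A. \<integral>\<^sup>+\<theta>. emeasure (PiM (UNIV :: int set) (\<lambda>_. \<theta>)) A \<partial>P)"

definition finite_perm :: "(int \<Rightarrow> int) \<Rightarrow> bool" where
  "finite_perm \<pi> \<longleftrightarrow> bij \<pi> \<and> finite {n. \<pi> n \<noteq> n}"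

definition symmetric_sets :: "'a measure \<Rightarrow> (int \<Rightarrow> 'a) set set" where
  "symmetric_sets M = {A \<in> sets (Zpow M).
     \<forall>\<pi>. finite_perm \<pi> \<longrightarrow> (\<lambda>x. x \<circ> \<pi>) -` A \<inter> space (Zpow M) = A}"

end

theory Submission
  imports Defs
begin


abbreviation KK :: "'a measure \<Rightarrow> (int \<Rightarrow> 'a) measure" where
  "KK \<theta> \<equiv> PiM (UNIV :: int set) (\<lambda>_. \<theta>)"

lemma KK_sets: "sets \<theta> = sets M \<Longrightarrow> sets (KK \<theta>) = sets (Zpow M)"
  by (rule sets_PiM_cong) auto

lemma KK_space: "sets \<theta> = sets M \<Longrightarrow> space (KK \<theta>) = space (Zpow M)"
  by (rule sets_eq_imp_space_eq, rule KK_sets)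

lemma KK_prob: "prob_space \<theta> \<Longrightarrow> prob_space (KK \<theta>)"
  by (intro prob_space_PiM)

lemma meas_emeasure_prob_algebra[measurable]:
  assumes "A \<in> sets M" shows "(\<lambda>x. emeasure x A) \<in> borel_measurable (prob_algebra M)"
  by (rule measurable_compose[OF measurable_prob_algebraD[OF measurable_ident_sets[OF refl]] measurable_emeasure_subprob_algebra[OF assms]])

lemma KK_measurable: "KK \<in> prob_algebra M \<rightarrow>\<^sub>M prob_algebra (Zpow M)"
proof (rule measurable_prob_algebra_generated[OF sets_PiM Int_stable_prod_algebra prod_algebra_sets_into_space])
  fix a assume a: "a \<in> space (prob_algebra M)"
  then show "prob_space (KK a)" by (auto simp: space_prob_algebra intro: KK_prob)
  show "sets (KK a) = sets (Zpow M)" using a KK_sets[of a M] by (simp add: space_prob_algebra)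
next
  fix A assume "A \<in> prod_algebra UNIV (\<lambda>_::int. M)"
  then obtain J E where A: "A = prod_emb UNIV (\<lambda>_. M) J (\<Pi>\<^sub>E j\<in>J. E j)" "finite J"
     "\<And>i. i \<in> J \<Longrightarrow> E i \<in> sets M" by (rule prod_algebraE) auto
  have "(\<lambda>a. \<Prod>j\<in>J. emeasure a (E j)) \<in> borel_measurable (prob_algebra M)"
    using A(3) by (intro borel_measurable_prod_ennreal meas_emeasure_prob_algebra) auto
  then show "(\<lambda>a. emeasure (KK a) A) \<in> borel_measurable (prob_algebra M)"
  proof (rule measurable_cong[THEN iffD1, rotated])
    fix a assume a: "a \<in> space (prob_algebra M)"
    then have s: "sets a = sets M" "prob_space a"
      by (auto simp: space_prob_algebra)
    have "space a = space M" "sets a = sets M" "prob_space a"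
      using s sets_eq_imp_space_eq[OF s(1)] by auto
    then have "A = prod_emb UNIV (\<lambda>_. a) J (\<Pi>\<^sub>E j\<in>J. E j)" using A by (simp add: prod_emb_def)
    then show "(\<Prod>j\<in>J. emeasure a (E j)) = emeasure (KK a) A"
      using A \<open>sets a = sets M\<close> \<open>prob_space a\<close> by (simp add: emeasure_PiM_emb)
  qed
qed

lemma Pbar_bind:
  assumes P: "prob_space P" "sets P = sets (prob_algebra M)"
  shows "Pbar_inf M P = P \<bind> KK"
proof -
  have sp: "space P = space (prob_algebra M)" using P(2) by (rule sets_eq_imp_space_eq)
  have ne: "space P \<noteq> {}" using P(1) prob_space.not_empty by blast
  have KKm: "KK \<in> P \<rightarrow>\<^sub>M prob_algebra (Zpow M)"
    using KK_measurable measurable_cong_sets[OF P(2) refl] by blast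
  have sb: "sets (P \<bind> KK) = sets (Zpow M)"
  proof (rule sets_bind[OF _ ne])
    fix x assume "x \<in> space P"
    then have "sets x = sets M" using sp by (simp add: space_prob_algebra)
    then show "sets (KK x) = sets (Zpow M)" by (rule KK_sets)
  qed
  have "P \<bind> KK = measure_of (space (P \<bind> KK)) (sets (P \<bind> KK)) (emeasure (P \<bind> KK))"
    by (simp add: measure_of_of_measure)
  also have "\<dots> = measure_of (space (Zpow M)) (sets (Zpow M)) (emeasure (P \<bind> KK))"
    using sb sets_eq_imp_space_eq[OF sb] by simp
  also have "\<dots> = Pbar_inf M P"
    unfolding Pbar_inf_def
  proof (rule measure_of_eq)
    show "sets (Zpow M) \<subseteq> Pow (space (Zpow M))" by (rule sets.space_closed)
    fix a assume "a \<in> sigma_sets (space (Zpow M)) (sets (Zpow M))"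
    then have a: "a \<in> sets (Zpow M)" by (simp add: sets.sigma_sets_eq)
    show "emeasure (P \<bind> KK) a = (\<integral>\<^sup>+ \<theta>. emeasure (KK \<theta>) a \<partial>P)"
      using P(1) sp a KKm by (intro emeasure_bind_prob_algebra) (auto simp: space_prob_algebra)
  qed
  finally show ?thesis ..
qed



lemma standard_encode:
  assumes "standard_prob_space M"
  shows "\<exists>(e :: 'a \<Rightarrow> real) (r :: real \<Rightarrow> 'a). e \<in> M \<rightarrow>\<^sub>M borel \<and> r \<in> borel \<rightarrow>\<^sub>M M \<and> (\<forall>a\<in>space M. r (e a) = a)
    \<and> (\<forall>a. 0 < e a) \<and> (\<forall>a. e a < 1)"
proof -
  from assms have pM: "prob_space M" and sb: "standard_borel M" by (auto simp: standard_prob_space_def)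
  from sb obtain B f g where B: "B \<in> sets (borel :: real measure)"
    and f: "f \<in> M \<rightarrow>\<^sub>M restrict_space borel B" and g: "g \<in> restrict_space borel B \<rightarrow>\<^sub>M M"
    and gf: "\<And>x. x\<in>space M \<Longrightarrow> g (f x) = x"
    unfolding standard_borel_def by blast
  obtain a0 where a0: "a0 \<in> space M" using prob_space.not_empty[OF pM] by blast
  have fm[measurable]: "f \<in> borel_measurable M" and fB: "f \<in> space M \<rightarrow> B"
    using f by (auto simp: measurable_restrict_space2_iff)
  define e where "e a = 1 / (1 + exp (- f a))" for a
  define h where "h y = ln (y / (1 - y))" for y :: real
  define S where "S = {y::real. 0 < y \<and> y < 1 \<and> h y \<in> B}"
  define r where "r y = (if y \<in> S then g (h y) else a0)" for y
  have hm[measurable]: "h \<in> borel_measurable borel" unfolding h_def by measurable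
  have Bm[measurable]: "B \<in> sets borel" by fact
  have Sm: "S \<in> sets borel" unfolding S_def by measurable
  have em: "e \<in> M \<rightarrow>\<^sub>M borel" unfolding e_def by measurable
  have epos: "0 < e a" for a unfolding e_def by (simp add: add_pos_pos)
  have elt: "e a < 1" for a unfolding e_def by (simp add: add_pos_pos)
  have he: "h (e a) = f a" for a
  proof -
    define u where "u = exp (- f a)"
    have u: "u > 0" unfolding u_def by simp
    have "e a / (1 - e a) = 1 / u"
      unfolding e_def u_def[symmetric] using u by (simp add: field_simps)
    also have "\<dots> = exp (f a)" unfolding u_def by (simp add: exp_minus divide_inverse)
    finally have "e a / (1 - e a) = exp (f a)" .
    then show ?thesis unfolding h_def by simp
  qed
  have re: "r (e a) = a" if "a \<in> space M" for a
    using that fB epos[of a] elt[of a] gf[OF that] by (auto simp: r_def S_def he)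
  have rm: "r \<in> borel \<rightarrow>\<^sub>M M"
    unfolding r_def
  proof (subst measurable_If_restrict_space_iff)
    show "{x \<in> space borel. x \<in> S} \<in> sets borel" using Sm by simp
    have "h \<in> restrict_space borel {x. x \<in> S} \<rightarrow>\<^sub>M restrict_space borel B"
    proof (rule measurable_restrict_space3)
      show "h \<in> borel \<rightarrow>\<^sub>M borel" by (rule hm)
      show "h \<in> {x. x \<in> S} \<rightarrow> B" by (auto simp: S_def)
    qed
    then have "(\<lambda>y. g (h y)) \<in> restrict_space borel {x. x \<in> S} \<rightarrow>\<^sub>M M"
      using g by (rule measurable_compose)
    then show "(\<lambda>y. g (h y)) \<in> restrict_space borel {x. x \<in> S} \<rightarrow>\<^sub>M M \<and>
       (\<lambda>x. a0) \<in> restrict_space borel {x. x \<notin> S} \<rightarrow>\<^sub>M M"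
      using a0 by simp
  qed
  show ?thesis
    by (rule exI[of _ e], rule exI[of _ r]) (simp add: em rm re epos elt)
qed



locale enc =
  fixes M :: "'a measure" and e :: "'a \<Rightarrow> real" and r :: "real \<Rightarrow> 'a"
  assumes pM: "prob_space M" and em[measurable]: "e \<in> M \<rightarrow>\<^sub>M borel"
    and rm[measurable]: "r \<in> borel \<rightarrow>\<^sub>M M"
    and re: "\<And>a. a \<in> space M \<Longrightarrow> r (e a) = a" and epos: "\<And>a. 0 < e a" and elt: "\<And>a. e a < 1"
begin

definition freq :: "real \<Rightarrow> nat \<Rightarrow> (int \<Rightarrow> 'a) \<Rightarrow> real" where
  "freq q n x = (\<Sum>k<Suc n. if e (x (int k)) \<le> q then 1 else 0) / real (Suc n)"

definition G :: "(int \<Rightarrow> 'a) \<Rightarrow> real \<Rightarrow> ereal" where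
  "G x q = limsup (\<lambda>n. ereal (freq q n x))"

definition H :: "(int \<Rightarrow> 'a) \<Rightarrow> real \<Rightarrow> ereal" where
  "H x t = (INF q\<in>{q\<in>\<rat>. t < q}. G x q)"

definition F :: "(int \<Rightarrow> 'a) \<Rightarrow> real \<Rightarrow> real" where
  "F x t = real_of_ereal (H x t)"

definition nu :: "(int \<Rightarrow> 'a) \<Rightarrow> real measure" where
  "nu x = interval_measure (F x)"

definition phi :: "(int \<Rightarrow> 'a) \<Rightarrow> 'a measure" where
  "phi x = distr (nu x) M r"

lemma freq_nonneg: "0 \<le> freq q n x"
  unfolding freq_def by (intro divide_nonneg_nonneg sum_nonneg) auto

lemma freq_le1: "freq q n x \<le> 1"
proof -
  have "(\<Sum>k<Suc n. if e (x (int k)) \<le> q then 1 else 0) \<le> (\<Sum>k<Suc n. (1::real))"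
    by (intro sum_mono) auto
  then show ?thesis unfolding freq_def by (simp add: divide_le_eq_1)
qed

lemma freq_mono: "q \<le> q' \<Longrightarrow> freq q n x \<le> freq q' n x"
  unfolding freq_def by (intro divide_right_mono sum_mono) auto

lemma freq_ge1: "1 \<le> q \<Longrightarrow> freq q n x = 1"
proof -
  assume q: "1 \<le> q"
  have "\<And>k. e (x (int k)) \<le> q" using elt q by (metis less_le_not_le order.trans nle_le)
  then show ?thesis unfolding freq_def by simp
qed

lemma freq_le0: "q \<le> 0 \<Longrightarrow> freq q n x = 0"
proof -
  assume q: "q \<le> 0"
  have "\<And>k. \<not> e (x (int k)) \<le> q" using epos q by (metis not_le order.strict_trans2)
  then show ?thesis unfolding freq_def by simp
qed

lemma G_nonneg: "0 \<le> G x q"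
  unfolding G_def by (intro le_Limsup) (auto simp: freq_nonneg)

lemma G_le1: "G x q \<le> 1"
  unfolding G_def by (intro Limsup_bounded) (auto simp: freq_le1)

lemma G_mono: "q \<le> q' \<Longrightarrow> G x q \<le> G x q'"
  unfolding G_def by (intro Limsup_mono) (auto simp: freq_mono)

lemma G_ge1: "1 \<le> q \<Longrightarrow> G x q = 1"
  unfolding G_def by (simp add: freq_ge1 Limsup_const)

lemma G_le0: "q \<le> 0 \<Longrightarrow> G x q = 0"
  unfolding G_def by (simp add: freq_le0 Limsup_const zero_ereal_def)

lemma rat_gt: "\<exists>q\<in>\<rat>. t < q \<and> q < t + d" if "d > 0" for t d :: real
  using Rats_dense_in_real[of t "t + d"] that by auto

lemma H_nonneg: "0 \<le> H x t"
  unfolding H_def by (intro INF_greatest G_nonneg)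

lemma H_le1: "H x t \<le> 1"
proof -
  obtain q where q: "q \<in> \<rat>" "t < q" using rat_gt[of 1 t] by auto
  then have "H x t \<le> G x q" unfolding H_def by (intro INF_lower) auto
  then show ?thesis using G_le1 order.trans by blast
qed

lemma H_mono: "t \<le> t' \<Longrightarrow> H x t \<le> H x t'"
  unfolding H_def by (intro INF_superset_mono) auto

lemma H_le_G: "t < q \<Longrightarrow> q \<in> \<rat> \<Longrightarrow> H x t \<le> G x q"
  unfolding H_def by (intro INF_lower) auto

lemma H_ge1: "1 \<le> t \<Longrightarrow> H x t = 1"
  unfolding H_def
proof -
  assume t: "1 \<le> t"
  obtain q where q: "q \<in> \<rat>" "t < q" using rat_gt[of 1 t] by auto
  have "(INF q\<in>{q \<in> \<rat>. t < q}. G x q) = (INF q\<in>{q \<in> \<rat>. t < q}. 1)"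
    using t by (intro INF_cong) (auto simp: G_ge1)
  also have "\<dots> = 1"
  proof -
    have "{q \<in> \<rat>. t < q} \<noteq> {}" using q by auto
    then show ?thesis by simp
  qed
  finally show "(INF q\<in>{q \<in> \<rat>. t < q}. G x q) = 1" .
qed

lemma H_neg: "t < 0 \<Longrightarrow> H x t = 0"
proof -
  assume t: "t < 0"
  obtain q where q: "q \<in> \<rat>" "t < q" "q < t + (- t)" using rat_gt[of "-t" t] t by auto
  then have "H x t \<le> G x q" by (intro H_le_G) auto
  also have "G x q = 0" using q by (intro G_le0) auto
  finally show ?thesis using H_nonneg[of x t] by simp
qed

lemma H_real: "H x t = ereal (F x t)"
  unfolding F_def using H_nonneg[of x t] H_le1[of x t]
  by (cases "H x t") auto

lemma F_nonneg: "0 \<le> F x t" using H_nonneg[of x t] by (simp add: H_real)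
lemma F_le1: "F x t \<le> 1" using H_le1[of x t] by (simp add: H_real)
lemma F_mono: "t \<le> t' \<Longrightarrow> F x t \<le> F x t'" using H_mono[of t t' x] by (simp add: H_real)

lemma F_right_cont: "continuous (at_right a) (F x)"
proof -
  have mono: "\<And>t t'. t \<le> t' \<Longrightarrow> F x t \<le> F x t'" by (rule F_mono)
  have "\<forall>\<epsilon>>0. \<exists>\<delta>>0. F x (a + \<delta>) - F x a < \<epsilon>"
  proof (intro allI impI)
  fix \<epsilon> :: real assume \<epsilon>: "\<epsilon> > 0"
  have "H x a < ereal (F x a + \<epsilon>)" using \<epsilon> by (simp add: H_real)
  then obtain q where q: "q \<in> \<rat>" "a < q" "G x q < ereal (F x a + \<epsilon>)"
    unfolding H_def INF_less_iff by auto
  define \<delta> where "\<delta> = (q - a) / 2"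
  have \<delta>: "\<delta> > 0" "a + \<delta> < q" using q by (auto simp: \<delta>_def field_simps)
  have "ereal (F x (a + \<delta>)) \<le> G x q" using H_le_G[OF \<delta>(2) q(1)] by (simp add: H_real)
  then have "ereal (F x (a + \<delta>)) < ereal (F x a + \<epsilon>)" using q(3) by (rule le_less_trans)
  then have "F x (a + \<delta>) < F x a + \<epsilon>" by simp
  then show "\<exists>\<delta>>0. F x (a + \<delta>) - F x a < \<epsilon>" using \<delta> by (intro exI[of _ \<delta>]) auto
  qed
  then show ?thesis using continuous_at_right_real_increasing[of "F x" a, OF mono] by simp
qed

lemma F_at_bot: "(F x \<longlongrightarrow> 0) at_bot"
proof (rule tendsto_eventually)
  show "\<forall>\<^sub>F t in at_bot. F x t = 0"
    unfolding eventually_at_bot_linorder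
    by (intro exI[of _ "-1"]) (auto simp: F_def H_neg)
qed

lemma F_at_top: "(F x \<longlongrightarrow> 1) at_top"
proof (rule tendsto_eventually)
  show "\<forall>\<^sub>F t in at_top. F x t = 1"
    unfolding eventually_at_top_linorder
    by (intro exI[of _ "1"]) (auto simp: F_def H_ge1)
qed

lemma nu_real_distribution: "real_distribution (nu x)"
  unfolding nu_def by (intro real_distribution_interval_measure F_mono F_right_cont F_at_bot F_at_top)

lemma nu_Iic: "emeasure (nu x) {..t} = F x t"
  unfolding nu_def by (intro emeasure_interval_measure_Iic F_mono F_right_cont F_at_bot)

lemma phi_space: "phi x \<in> space (prob_algebra M)"
proof -
  interpret real_distribution "nu x" by (rule nu_real_distribution)
  show ?thesis unfolding phi_def space_prob_algebra
    by (auto intro!: prob_space_distr)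
qed

lemma freq_meas[measurable]: "(\<lambda>x. freq q n x) \<in> borel_measurable (Zpow M)"
  unfolding freq_def by measurable

lemma G_meas[measurable]: "(\<lambda>x. G x q) \<in> borel_measurable (Zpow M)"
  unfolding G_def by measurable

lemma H_meas[measurable]: "(\<lambda>x. H x t) \<in> borel_measurable (Zpow M)"
  unfolding H_def
  by (rule borel_measurable_INF) (auto intro: countable_subset[OF _ countable_rat])

lemma F_meas[measurable]: "(\<lambda>x. F x t) \<in> borel_measurable (Zpow M)"
  unfolding F_def by measurable

lemma sets_borel_atMost: "sets (borel :: real measure) = sigma_sets UNIV (range atMost)"
  by (subst borel_eq_atMost) (simp add: sets_measure_of)

lemma nu_meas: "nu \<in> Zpow M \<rightarrow>\<^sub>M prob_algebra borel"
proof (rule measurable_prob_algebra_generated[OF sets_borel_atMost])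
  show "Int_stable (range (atMost :: real \<Rightarrow> _))"
    by (auto simp: Int_stable_def intro!: image_eqI[where x="min _ _"])
  show "range atMost \<subseteq> Pow (UNIV::real set)" by auto
  fix x show "prob_space (nu x)" using nu_real_distribution[of x] by (simp add: real_distribution_def)
  show "sets (nu x) = sets borel" by (simp add: nu_def)
next
  fix A :: "real set" assume "A \<in> range atMost"
  then obtain t where A: "A = {..t}" by auto
  show "(\<lambda>a. emeasure (nu a) A) \<in> borel_measurable (Zpow M)"
    unfolding A nu_Iic by measurable
qed

lemma phi_meas: "phi \<in> Zpow M \<rightarrow>\<^sub>M prob_algebra M"
  unfolding phi_def
  by (rule measurable_compose[OF nu_meas measurable_distr_prob_space[OF rm]])

end



lemma space_Zpow: "space (Zpow M) = {x. \<forall>i. x i \<in> space M}"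
  by (auto simp: space_PiM PiE_def extensional_def Pi_def)

lemma Zpow_comp: "x \<in> space (Zpow M) \<Longrightarrow> x \<circ> \<pi> \<in> space (Zpow M)"
  by (auto simp: space_Zpow)

lemma symmetric_measurable:
  assumes f: "f \<in> Zpow M \<rightarrow>\<^sub>M N"
    and inv: "\<And>x \<pi>. x \<in> space (Zpow M) \<Longrightarrow> finite_perm \<pi> \<Longrightarrow> f (x \<circ> \<pi>) = f x"
  shows "f \<in> sigma (space (Zpow M)) (symmetric_sets M) \<rightarrow>\<^sub>M N"
proof -
  have sub: "symmetric_sets M \<subseteq> Pow (space (Zpow M))"
    unfolding symmetric_sets_def using sets.sets_into_space by auto
  have sp: "space (sigma (space (Zpow M)) (symmetric_sets M)) = space (Zpow M)"
    using sub by (simp add: space_measure_of)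
  show ?thesis
  proof (rule measurableI)
    fix x assume "x \<in> space (sigma (space (Zpow M)) (symmetric_sets M))"
    then show "f x \<in> space N" using sp measurable_space[OF f] by auto
  next
    fix A assume A: "A \<in> sets N"
    have "f -` A \<inter> space (Zpow M) \<in> symmetric_sets M"
      unfolding symmetric_sets_def
    proof (intro CollectI conjI allI impI)
      show "f -` A \<inter> space (Zpow M) \<in> sets (Zpow M)" using measurable_sets[OF f A] .
      fix \<pi> :: "int \<Rightarrow> int" assume \<pi>: "finite_perm \<pi>"
      show "(\<lambda>x. x \<circ> \<pi>) -` (f -` A \<inter> space (Zpow M)) \<inter> space (Zpow M) = f -` A \<inter> space (Zpow M)"
        using inv[OF _ \<pi>] Zpow_comp[of _ M \<pi>] by auto
    qed
    then show "f -` A \<inter> space (sigma (space (Zpow M)) (symmetric_sets M))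
        \<in> sets (sigma (space (Zpow M)) (symmetric_sets M))"
      using sp sub by (auto simp: sets_measure_of)
  qed
qed

context enc begin

lemma freq_perm_diff:
  assumes fin: "finite {m. \<pi> m \<noteq> m}"
  shows "\<bar>freq q n (x \<circ> \<pi>) - freq q n x\<bar> \<le> real (card {m. \<pi> m \<noteq> m}) / real (Suc n)"
proof -
  define S where "S = {m. \<pi> m \<noteq> m}"
  define a where "a k = (if e (x (\<pi> (int k))) \<le> q then 1 else 0 :: real)" for k :: nat
  define b where "b k = (if e (x (int k)) \<le> q then 1 else 0 :: real)" for k :: nat
  have "\<bar>(\<Sum>k<Suc n. a k) - (\<Sum>k<Suc n. b k)\<bar> = \<bar>\<Sum>k<Suc n. a k - b k\<bar>"
    by (simp add: sum_subtractf)
  also have "\<dots> \<le> (\<Sum>k<Suc n. \<bar>a k - b k\<bar>)" by (rule sum_abs)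
  also have "\<dots> = (\<Sum>k\<in>{k\<in>{..<Suc n}. int k \<in> S}. \<bar>a k - b k\<bar>)"
    by (rule sum.mono_neutral_right) (auto simp: a_def b_def S_def)
  also have "\<dots> \<le> (\<Sum>k\<in>{k\<in>{..<Suc n}. int k \<in> S}. 1)"
    by (intro sum_mono) (auto simp: a_def b_def)
  also have "\<dots> = real (card {k\<in>{..<Suc n}. int k \<in> S})" by simp
  also have "card {k\<in>{..<Suc n}. int k \<in> S} \<le> card S"
  proof -
    have "{k\<in>{..<Suc n}. int k \<in> S} \<subseteq> nat ` S" by (auto intro: image_eqI[where x="int _"])
    then have "card {k\<in>{..<Suc n}. int k \<in> S} \<le> card (nat ` S)"
      using fin by (intro card_mono) (auto simp: S_def)
    also have "\<dots> \<le> card S" using fin by (intro card_image_le) (auto simp: S_def)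
    finally show ?thesis .
  qed
  finally have *: "\<bar>(\<Sum>k<Suc n. a k) - (\<Sum>k<Suc n. b k)\<bar> \<le> real (card S)" by simp
  have "freq q n (x \<circ> \<pi>) - freq q n x = ((\<Sum>k<Suc n. a k) - (\<Sum>k<Suc n. b k)) / real (Suc n)"
    unfolding freq_def a_def b_def by (simp add: diff_divide_distrib)
  then show ?thesis using * unfolding S_def[symmetric]
    by (simp add: abs_divide divide_right_mono)
qed

lemma G_perm:
  assumes fin: "finite {m. \<pi> m \<noteq> m}"
  shows "G (x \<circ> \<pi>) q = G x q"
proof -
  define c where "c = real (card {m. \<pi> m \<noteq> m})"
  define u where "u n = ereal (freq q n (x \<circ> \<pi>) - freq q n x)" for n
  have "(\<lambda>n. freq q n (x \<circ> \<pi>) - freq q n x) \<longlonglongrightarrow> 0"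
  proof (rule Lim_null_comparison)
    show "\<forall>\<^sub>F n in sequentially. norm (freq q n (x \<circ> \<pi>) - freq q n x) \<le> c / real (Suc n)"
      using freq_perm_diff[OF fin] by (auto simp: c_def)
    show "(\<lambda>n. c / real (Suc n)) \<longlonglongrightarrow> 0"
    proof -
      have "(\<lambda>n. c * inverse (real (Suc n))) \<longlonglongrightarrow> 0"
        by (intro tendsto_mult_right_zero LIMSEQ_inverse_real_of_nat)
      then show ?thesis by (simp add: divide_inverse)
    qed
  qed
  then have u: "u \<longlonglongrightarrow> 0" unfolding u_def by (simp add: zero_ereal_def tendsto_ereal)
  have "G (x \<circ> \<pi>) q = limsup (\<lambda>n. u n + ereal (freq q n x))"
    unfolding G_def u_def by simp
  also have "\<dots> = 0 + limsup (\<lambda>n. ereal (freq q n x))"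
    by (rule ereal_limsup_lim_add[OF u]) simp
  finally show ?thesis unfolding G_def by simp
qed

lemma phi_perm:
  assumes fin: "finite {m. \<pi> m \<noteq> m}"
  shows "phi (x \<circ> \<pi>) = phi x"
  unfolding phi_def nu_def F_def H_def G_perm[OF fin] ..

lemma phi_sym_meas: "phi \<in> sigma (space (Zpow M)) (symmetric_sets M) \<rightarrow>\<^sub>M prob_algebra M"
  by (rule symmetric_measurable[OF phi_meas]) (auto simp: finite_perm_def phi_perm)

end



lemma KK_indep:
  assumes "prob_space \<theta>"
  shows "prob_space.indep_vars (PiM (UNIV::int set) (\<lambda>_. \<theta>)) (\<lambda>_. \<theta>) (\<lambda>i x. x i) UNIV"
proof -
  interpret P: prob_space "PiM (UNIV::int set) (\<lambda>_. \<theta>)" by (intro prob_space_PiM assms)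
  have "distr (PiM (UNIV::int set) (\<lambda>_. \<theta>)) (PiM UNIV (\<lambda>_. \<theta>)) (\<lambda>x. \<lambda>i\<in>UNIV. x i)
     = PiM UNIV (\<lambda>i. distr (PiM (UNIV::int set) (\<lambda>_. \<theta>)) \<theta> (\<lambda>x. x i))"
  proof -
    have eq: "\<And>i. distr (PiM (UNIV::int set) (\<lambda>_. \<theta>)) \<theta> (\<lambda>x. x i) = \<theta>"
      using assms by (intro distr_PiM_component) auto
    show ?thesis by (simp add: restrict_UNIV eq)
  qed
  then show ?thesis
    by (subst P.indep_vars_iff_distr_eq_PiM') auto
qed

context enc begin

lemma freq_tail:
  assumes \<theta>: "\<theta> \<in> space (prob_algebra M)" and \<epsilon>: "\<epsilon> > 0"
  shows "measure (PiM (UNIV::int set) (\<lambda>_. \<theta>)) {x\<in>space (PiM (UNIV::int set) (\<lambda>_. \<theta>)).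
            \<epsilon> \<le> \<bar>freq q n x - measure \<theta> {a\<in>space M. e a \<le> q}\<bar>}
         \<le> 2 * exp (- 2 * real (Suc n) * \<epsilon>\<^sup>2)"
proof -
  let ?K = "PiM (UNIV::int set) (\<lambda>_. \<theta>)"
  have th: "prob_space \<theta>" "sets \<theta> = sets M" using \<theta> by (auto simp: space_prob_algebra)
  have spth: "space \<theta> = space M" using th(2) by (rule sets_eq_imp_space_eq)
  interpret P: prob_space ?K by (intro prob_space_PiM th)
  define g where "g a = (if e a \<le> q then 1 else 0 :: real)" for a
  have gm: "g \<in> borel_measurable \<theta>"
    unfolding g_def by (subst measurable_cong_sets[OF th(2) refl]) measurable
  define Y where "Y j x = g (x j)" for j :: int and x :: "int \<Rightarrow> 'a"
  define I where "I = int ` {..<Suc n}"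
  have Ifin: "finite I" and Ine: "I \<noteq> {}" and cI: "card I = Suc n"
    unfolding I_def by (auto simp: card_image)
  have ind: "P.indep_vars (\<lambda>_. borel) Y I"
    unfolding Y_def
    by (rule P.indep_vars_subset[OF P.indep_vars_compose2[OF KK_indep[OF th(1)] gm]]) auto
  have comp: "(\<lambda>x. x j) \<in> ?K \<rightarrow>\<^sub>M \<theta>" for j :: int by (rule measurable_component_singleton) auto
  have dY: "distr ?K borel (Y j) = distr \<theta> borel g" for j
  proof -
    have "distr ?K borel (Y j) = distr (distr ?K \<theta> (\<lambda>x. x j)) borel g"
      unfolding Y_def by (subst distr_distr[OF gm comp]) (simp add: comp_def)
    also have "distr ?K \<theta> (\<lambda>x. x j) = \<theta>" by (rule distr_PiM_component) (auto intro: th)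
    finally show ?thesis .
  qed
  define p where "p = measure \<theta> {a\<in>space M. e a \<le> q}"
  have Ep: "P.expectation (Y 0) = p"
  proof -
    have "P.expectation (Y 0) = integral\<^sup>L (distr ?K borel (Y 0)) (\<lambda>x. x)"
      by (rule integral_distr[symmetric]) (auto simp: Y_def intro: measurable_compose[OF comp gm])
    also have "\<dots> = integral\<^sup>L (distr \<theta> borel g) (\<lambda>x. x)" by (simp add: dY)
    also have "\<dots> = integral\<^sup>L \<theta> g" by (rule integral_distr[OF gm]) simp
    also have "\<dots> = integral\<^sup>L \<theta> (indicator {a\<in>space M. e a \<le> q})"
      by (intro Bochner_Integration.integral_cong) (auto simp: g_def indicator_def spth)
    also have "\<dots> = p" unfolding p_def
      by (simp add: spth Int_absorb2)
    finally show ?thesis .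
  qed
  interpret Hf: Hoeffding_ineq_iid ?K I Y "Y 0" 0 1 p
  proof unfold_locales
    show "finite I" by fact
    show "P.indep_vars (\<lambda>_. borel) Y I" by fact
    fix i assume "i \<in> I" show "distr ?K borel (Y i) = distr ?K borel (Y 0)" by (simp add: dY)
  next
    show "Y 0 \<in> borel_measurable ?K" unfolding Y_def by (rule measurable_compose[OF comp gm])
    show "AE x in ?K. Y 0 x \<in> {0..1}" by (auto simp: Y_def g_def)
    show "p \<equiv> P.expectation (Y 0)" using Ep by simp
  qed
  have "P.prob {x\<in>space ?K. \<bar>(\<Sum>i\<in>I. Y i x) - real (card I) * p\<bar> \<ge> real (Suc n) * \<epsilon>}
        \<le> 2 * exp (-2 * (real (Suc n) * \<epsilon>)\<^sup>2 / (real (card I) * (1 - 0)\<^sup>2))"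
    using \<epsilon> Ine by (intro Hf.Hoeffding_ineq_abs_ge) auto
  also have "-2 * (real (Suc n) * \<epsilon>)\<^sup>2 / (real (card I) * (1 - 0)\<^sup>2) = - 2 * real (Suc n) * \<epsilon>\<^sup>2"
  proof -
    have m: "real (Suc n) \<noteq> 0" by simp
    have gen: "-2 * (m * \<epsilon>)\<^sup>2 / (m * (1 - 0)\<^sup>2) = - 2 * m * \<epsilon>\<^sup>2" if "m \<noteq> 0" for m :: real
      using that by (simp add: field_simps power2_eq_square)
    show ?thesis unfolding cI by (rule gen[OF m])
  qed
  also have "{x\<in>space ?K. \<bar>(\<Sum>i\<in>I. Y i x) - real (card I) * p\<bar> \<ge> real (Suc n) * \<epsilon>}
     = {x\<in>space ?K. \<epsilon> \<le> \<bar>freq q n x - p\<bar>}"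
  proof -
    have "(\<Sum>i\<in>I. Y i x) = (\<Sum>k<Suc n. Y (int k) x)" for x
      unfolding I_def by (subst sum.reindex) auto
    moreover have "freq q n x = (\<Sum>k<Suc n. Y (int k) x) / real (Suc n)" for x
      unfolding freq_def Y_def g_def ..
    moreover have "(\<epsilon> \<le> \<bar>s / real (Suc n) - p\<bar>) \<longleftrightarrow> (real (Suc n) * \<epsilon> \<le> \<bar>s - real (Suc n) * p\<bar>)" for s
    proof -
      have "s / real (Suc n) - p = (s - real (Suc n) * p) / real (Suc n)" by (simp add: field_simps)
      then show ?thesis by (simp add: abs_divide field_simps)
    qed
    ultimately show ?thesis using cI by auto
  qed
  finally show ?thesis unfolding p_def .
qed


lemma freq_lim:
  assumes \<theta>: "\<theta> \<in> space (prob_algebra M)"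
  shows "AE x in PiM (UNIV::int set) (\<lambda>_. \<theta>). (\<lambda>n. freq q n x) \<longlonglongrightarrow> measure \<theta> {a\<in>space M. e a \<le> q}"
proof -
  let ?K = "PiM (UNIV::int set) (\<lambda>_. \<theta>)"
  define p where "p = measure \<theta> {a\<in>space M. e a \<le> q}"
  have th: "prob_space \<theta>" "sets \<theta> = sets M" using \<theta> by (auto simp: space_prob_algebra)
  interpret P: prob_space ?K by (intro prob_space_PiM th)
  have sK: "sets ?K = sets (Zpow M)" by (rule KK_sets[OF th(2)])
  have fm: "(\<lambda>x. freq q n x) \<in> borel_measurable ?K" for n
    by (subst measurable_cong_sets[OF sK refl]) (rule freq_meas)
  have ev: "AE x in ?K. eventually (\<lambda>n. \<bar>freq q n x - p\<bar> < 1 / real (Suc m)) sequentially" for m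
  proof -
    define \<epsilon> where "\<epsilon> = 1 / real (Suc m)"
    have \<epsilon>: "\<epsilon> > 0" by (simp add: \<epsilon>_def)
    define A where "A n = {x\<in>space ?K. \<epsilon> \<le> \<bar>freq q n x - p\<bar>}" for n
    have Am: "A n \<in> sets ?K" for n unfolding A_def using fm[of n] by measurable
    have bound: "measure ?K (A n) \<le> 2 * exp (- 2 * \<epsilon>\<^sup>2) * exp (- 2 * \<epsilon>\<^sup>2) ^ n" for n
    proof -
      have "measure ?K (A n) \<le> 2 * exp (- 2 * real (Suc n) * \<epsilon>\<^sup>2)"
        unfolding A_def p_def by (rule freq_tail[OF \<theta> \<epsilon>])
      also have "exp (- 2 * real (Suc n) * \<epsilon>\<^sup>2) = exp (- 2 * \<epsilon>\<^sup>2) * exp (- 2 * \<epsilon>\<^sup>2) ^ n"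
      proof -
        have "exp (- 2 * real (Suc n) * \<epsilon>\<^sup>2) = exp (real (Suc n) * (- 2 * \<epsilon>\<^sup>2))" by (simp only: mult_ac mult_minus_left mult_minus_right)
        also have "\<dots> = exp (- 2 * \<epsilon>\<^sup>2) ^ Suc n" by (rule exp_of_nat_mult)
        finally show ?thesis by simp
      qed
      finally show ?thesis by (simp add: mult_ac)
    qed
    have sumg: "summable (\<lambda>n. 2 * exp (- 2 * \<epsilon>\<^sup>2) * exp (- 2 * \<epsilon>\<^sup>2) ^ n)"
      using \<epsilon> by (intro summable_mult summable_geometric) auto
    have sumA: "summable (\<lambda>n. measure ?K (A n))"
    proof (rule summable_comparison_test[OF _ sumg])
      have "norm (measure ?K (A n)) \<le> 2 * exp (- 2 * \<epsilon>\<^sup>2) * exp (- 2 * \<epsilon>\<^sup>2) ^ n" for n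
        using bound[of n] by (simp only: real_norm_def abs_of_nonneg[OF measure_nonneg])
      then show "\<exists>N. \<forall>n\<ge>N. norm (measure ?K (A n)) \<le> 2 * exp (- 2 * \<epsilon>\<^sup>2) * exp (- 2 * \<epsilon>\<^sup>2) ^ n"
        by blast
    qed
    have "AE x in ?K. eventually (\<lambda>n. x \<in> space ?K - A n) sequentially"
      by (rule borel_cantelli_AE1[OF Am _ sumA]) (simp add: P.emeasure_eq_measure)
    then show ?thesis
      by (rule AE_mp) (auto simp: A_def \<epsilon>_def elim!: eventually_mono intro!: AE_I2)
  qed
  have "AE x in ?K. \<forall>m. eventually (\<lambda>n. \<bar>freq q n x - p\<bar> < 1 / real (Suc m)) sequentially"
    using ev by (simp add: AE_all_countable)
  then show ?thesis unfolding p_def[symmetric]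
  proof (rule AE_mp, intro AE_I2 impI)
    fix x assume h: "\<forall>m. eventually (\<lambda>n. \<bar>freq q n x - p\<bar> < 1 / real (Suc m)) sequentially"
    show "(\<lambda>n. freq q n x) \<longlonglongrightarrow> p"
    proof (rule tendstoI)
      fix r :: real assume r: "r > 0"
      obtain m where m: "inverse (real (Suc m)) < r" using reals_Archimedean[OF r] by auto
      show "eventually (\<lambda>n. dist (freq q n x) p < r) sequentially"
      proof -
        have m': "1 / real (Suc m) < r" using m by (simp add: inverse_eq_divide)
        show ?thesis
          using h[rule_format, of m] by (rule eventually_mono) (auto simp: dist_real_def intro: less_trans[OF _ m'])
      qed
    qed
  qed
qed

end

context enc begin

lemma phi_det:
  assumes \<theta>: "\<theta> \<in> space (prob_algebra M)"
    and G: "\<forall>q\<in>\<rat>. G x q = ereal (cdf (distr \<theta> borel e) q)"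
  shows "phi x = \<theta>"
proof -
  have th: "prob_space \<theta>" "sets \<theta> = sets M" using \<theta> by (auto simp: space_prob_algebra)
  have spth: "space \<theta> = space M" using th(2) by (rule sets_eq_imp_space_eq)
  have eth: "e \<in> \<theta> \<rightarrow>\<^sub>M borel" by (subst measurable_cong_sets[OF th(2) refl]) (rule em)
  define \<rho> where "\<rho> = distr \<theta> borel e"
  interpret rho: real_distribution \<rho> unfolding \<rho>_def
    using prob_space.real_distribution_distr[OF th(1) eth] .
  let ?C = "cdf \<rho>"
  have G': "\<forall>q\<in>\<rat>. G x q = ereal (?C q)" using G by (simp add: \<rho>_def)
  have Fx: "F x t = ?C t" for t
  proof (rule antisym)
    have "ereal (?C t) \<le> H x t" unfolding H_def
      by (intro INF_greatest) (use G' in \<open>auto intro!: rho.cdf_nondecreasing\<close>)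
    then show "?C t \<le> F x t" by (simp add: H_real)
  next
    show "F x t \<le> ?C t"
    proof (rule field_le_epsilon)
      fix \<epsilon> :: real assume \<epsilon>: "0 < \<epsilon>"
      have "\<forall>\<epsilon>>0. \<exists>\<delta>>0. ?C (t + \<delta>) - ?C t < \<epsilon>"
        using continuous_at_right_real_increasing[of ?C t] rho.cdf_nondecreasing rho.cdf_is_right_cont
        by blast
      then obtain \<delta> where \<delta>: "\<delta> > 0" "?C (t + \<delta>) - ?C t < \<epsilon>" using \<epsilon> by blast
      obtain q where q: "q \<in> \<rat>" "t < q" "q < t + \<delta>" using rat_gt[OF \<delta>(1)] by blast
      have "ereal (F x t) \<le> G x q" using H_le_G[OF q(2,1)] by (simp add: H_real)
      also have "\<dots> = ereal (?C q)" using G' q(1) by simp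
      finally have "F x t \<le> ?C q" by simp
      also have "?C q \<le> ?C (t + \<delta>)" using q by (intro rho.cdf_nondecreasing) simp
      finally show "F x t \<le> ?C t + \<epsilon>" using \<delta> by simp
    qed
  qed
  have "nu x = \<rho>"
  proof (rule cdf_unique[OF nu_real_distribution])
    show "real_distribution \<rho>" ..
    have Fx': "F x = cdf \<rho>" using Fx by (simp add: fun_eq_iff)
    show "cdf (nu x) = cdf \<rho>" unfolding nu_def Fx'
      by (rule cdf_interval_measure) (auto intro: rho.cdf_nondecreasing rho.cdf_is_right_cont rho.cdf_lim_at_bot)
  qed
  then have "phi x = distr \<rho> M r" by (simp add: phi_def)
  also have "\<dots> = distr \<theta> M (\<lambda>a. r (e a))"
    unfolding \<rho>_def by (subst distr_distr[OF rm eth]) (simp add: comp_def)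
  also have "\<dots> = distr \<theta> M (\<lambda>a. a)"
    by (rule distr_cong) (auto simp: re spth)
  also have "\<dots> = \<theta>" by (rule distr_id2[OF th(2)[symmetric]])
  finally show ?thesis .
qed

lemma phi_AE:
  assumes \<theta>: "\<theta> \<in> space (prob_algebra M)"
  shows "AE x in PiM (UNIV::int set) (\<lambda>_. \<theta>). phi x = \<theta>"
proof -
  have th: "prob_space \<theta>" "sets \<theta> = sets M" using \<theta> by (auto simp: space_prob_algebra)
  have spth: "space \<theta> = space M" using th(2) by (rule sets_eq_imp_space_eq)
  have eth: "e \<in> \<theta> \<rightarrow>\<^sub>M borel" by (subst measurable_cong_sets[OF th(2) refl]) (rule em)
  have cdfq: "cdf (distr \<theta> borel e) q = measure \<theta> {a\<in>space M. e a \<le> q}" for q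
    unfolding cdf_def using eth by (subst measure_distr) (auto simp: spth intro!: arg_cong[where f="measure \<theta>"])
  have "AE x in PiM (UNIV::int set) (\<lambda>_. \<theta>). \<forall>q\<in>\<rat>. (\<lambda>n. freq q n x) \<longlonglongrightarrow> measure \<theta> {a\<in>space M. e a \<le> q}"
    by (rule AE_ball_countable'[OF freq_lim[OF \<theta>] countable_rat])
  then show ?thesis
  proof (rule AE_mp, intro AE_I2 impI)
    fix x assume h: "\<forall>q\<in>\<rat>. (\<lambda>n. freq q n x) \<longlonglongrightarrow> measure \<theta> {a\<in>space M. e a \<le> q}"
    show "phi x = \<theta>"
    proof (rule phi_det[OF \<theta>], intro ballI)
      fix q :: real assume q: "q \<in> \<rat>"
      have "(\<lambda>n. ereal (freq q n x)) \<longlonglongrightarrow> ereal (cdf (distr \<theta> borel e) q)"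
        using h q by (simp add: cdfq)
      then show "G x q = ereal (cdf (distr \<theta> borel e) q)"
        unfolding G_def by (intro lim_imp_Limsup) simp_all
    qed
  qed
qed

end


lemma Tinf_meas: assumes [measurable]: "T \<in> M \<rightarrow>\<^sub>M M" shows "Tinf T \<in> Zpow M \<rightarrow>\<^sub>M Zpow M"
  unfolding Tinf_def
proof (rule measurable_PiM_single')
  fix i :: int show "(\<lambda>x. T (x i)) \<in> Zpow M \<rightarrow>\<^sub>M M"
  proof -
    have "(\<lambda>x. x i) \<in> Zpow M \<rightarrow>\<^sub>M M" by (rule measurable_component_singleton) simp
    then show ?thesis by (rule measurable_compose) (rule assms)
  qed
  show "(\<lambda>x i. T (x i)) \<in> space (Zpow M) \<rightarrow> (\<Pi>\<^sub>E i\<in>UNIV. space M)"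
    using measurable_space[OF assms] by (auto simp: space_PiM)
qed

lemma distr_KK_Tinf:
  assumes T: "T \<in> M \<rightarrow>\<^sub>M M" and \<theta>: "\<theta> \<in> space (prob_algebra M)"
  shows "distr (KK \<theta>) (Zpow M) (Tinf T) = KK (push M T \<theta>)"
proof -
  have th: "prob_space \<theta>" "sets \<theta> = sets M" using \<theta> by (auto simp: space_prob_algebra)
  have spth: "space \<theta> = space M" using th(2) by (rule sets_eq_imp_space_eq)
  have Tth: "T \<in> \<theta> \<rightarrow>\<^sub>M M" by (subst measurable_cong_sets[OF th(2) refl]) (rule T)
  have pth: "prob_space (push M T \<theta>)" "sets (push M T \<theta>) = sets M"
    unfolding push_def using prob_space.prob_space_distr[OF th(1) Tth] by auto
  have sK: "sets (KK \<theta>) = sets (Zpow M)" by (rule KK_sets[OF th(2)])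
  have TK: "Tinf T \<in> KK \<theta> \<rightarrow>\<^sub>M Zpow M"
    by (subst measurable_cong_sets[OF sK refl]) (rule Tinf_meas[OF T])
  show ?thesis
  proof (rule measure_eqI_PiM_infinite[where I=UNIV and M="\<lambda>_. M"])
    show "sets (distr (KK \<theta>) (Zpow M) (Tinf T)) = sets (Zpow M)" by simp
    show "sets (KK (push M T \<theta>)) = sets (Zpow M)" by (rule KK_sets[OF pth(2)])
    show "finite_measure (distr (KK \<theta>) (Zpow M) (Tinf T))"
      using prob_space.prob_space_distr[OF KK_prob[OF th(1)] TK] by (simp add: prob_space_def)
  next
    fix A J assume J: "finite J" "J \<subseteq> (UNIV::int set)" and A: "\<And>i. i \<in> J \<Longrightarrow> A i \<in> sets M"
    have "emeasure (distr (KK \<theta>) (Zpow M) (Tinf T)) (prod_emb UNIV (\<lambda>_. M) J (Pi\<^sub>E J A))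
      = emeasure (KK \<theta>) (Tinf T -` prod_emb UNIV (\<lambda>_. M) J (Pi\<^sub>E J A) \<inter> space (KK \<theta>))"
      using J A by (intro emeasure_distr TK sets_PiM_I) auto
    also have "Tinf T -` prod_emb UNIV (\<lambda>_. M) J (Pi\<^sub>E J A) \<inter> space (KK \<theta>)
       = prod_emb UNIV (\<lambda>_. \<theta>) J (Pi\<^sub>E J (\<lambda>j. T -` A j \<inter> space \<theta>))"
      using measurable_space[OF T] A[THEN sets.sets_into_space]
      by (auto simp: prod_emb_def space_PiM PiE_iff Tinf_def spth)
    also have "emeasure (KK \<theta>) \<dots> = (\<Prod>j\<in>J. emeasure \<theta> (T -` A j \<inter> space \<theta>))"
      using J A th by (intro emeasure_PiM_emb) (auto intro!: measurable_sets[OF Tth])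
    also have "\<dots> = (\<Prod>j\<in>J. emeasure (push M T \<theta>) (A j))"
      unfolding push_def using A by (intro prod.cong refl emeasure_distr[symmetric] Tth) auto
    also have "\<dots> = emeasure (KK (push M T \<theta>)) (prod_emb UNIV (\<lambda>_. push M T \<theta>) J (Pi\<^sub>E J A))"
      using J A pth by (intro emeasure_PiM_emb[symmetric]) auto
    also have "prod_emb UNIV (\<lambda>_. push M T \<theta>) J (Pi\<^sub>E J A) = prod_emb UNIV (\<lambda>_. M) J (Pi\<^sub>E J A)"
      using sets_eq_imp_space_eq[OF pth(2)] by (simp add: prod_emb_def)
    finally show "emeasure (distr (KK \<theta>) (Zpow M) (Tinf T)) (prod_emb UNIV (\<lambda>_. M) J (Pi\<^sub>E J A)) =
      emeasure (KK (push M T \<theta>)) (prod_emb UNIV (\<lambda>_. M) J (Pi\<^sub>E J A))" .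
  qed
qed

lemma cdf_rat_inf:
  fixes C :: "real \<Rightarrow> real"
  assumes mono: "\<And>x y. x \<le> y \<Longrightarrow> C x \<le> C y" and rc: "\<And>a. continuous (at_right a) C"
  shows "(INF q\<in>{q\<in>\<rat>. t < q}. ereal (C q)) = ereal (C t)"
proof (rule antisym)
  show "ereal (C t) \<le> (INF q\<in>{q\<in>\<rat>. t < q}. ereal (C q))"
    by (intro INF_greatest) (auto intro: mono)
  have "(INF q\<in>{q\<in>\<rat>. t < q}. ereal (C q)) \<le> ereal (C t + \<epsilon>)" if \<epsilon>: "\<epsilon> > 0" for \<epsilon>
  proof -
    have "\<forall>\<epsilon>>0. \<exists>\<delta>>0. C (t + \<delta>) - C t < \<epsilon>"
      using continuous_at_right_real_increasing[of C t, OF mono] rc[of t] by simp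
    then obtain \<delta> where \<delta>: "\<delta> > 0" "C (t + \<delta>) - C t < \<epsilon>" using \<epsilon> by blast
    obtain q where q: "q \<in> \<rat>" "t < q" "q < t + \<delta>" using Rats_dense_in_real[of t "t + \<delta>"] \<delta> by auto
    have "(INF q\<in>{q\<in>\<rat>. t < q}. ereal (C q)) \<le> ereal (C q)" using q by (intro INF_lower) auto
    also have "C q \<le> C (t + \<delta>)" using q by (intro mono) simp
    then have "ereal (C q) \<le> ereal (C t + \<epsilon>)" using \<delta> by simp
    finally show ?thesis .
  qed
  note eps = this
  show "(INF q\<in>{q\<in>\<rat>. t < q}. ereal (C q)) \<le> ereal (C t)"
  proof (rule ereal_le_epsilon2)
    fix \<epsilon> :: real assume "0 < \<epsilon>"
    then have "(INF q\<in>{q\<in>\<rat>. t < q}. ereal (C q)) \<le> ereal (C t + \<epsilon>)" by (rule eps)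
    then show "(INF q\<in>{q\<in>\<rat>. t < q}. ereal (C q)) \<le> ereal (C t) + ereal \<epsilon>" by simp
  qed
qed

context enc begin

lemma measure_eq_rat:
  assumes \<mu>: "\<mu> \<in> space (prob_algebra M)" and \<nu>: "\<nu> \<in> space (prob_algebra M)"
    and eq: "\<forall>q\<in>\<rat>. emeasure \<mu> {a\<in>space M. e a \<le> q} = emeasure \<nu> {a\<in>space M. e a \<le> q}"
  shows "\<mu> = \<nu>"
proof -
  have mu: "prob_space \<mu>" "sets \<mu> = sets M" using \<mu> by (auto simp: space_prob_algebra)
  have nu: "prob_space \<nu>" "sets \<nu> = sets M" using \<nu> by (auto simp: space_prob_algebra)
  have emu: "e \<in> \<mu> \<rightarrow>\<^sub>M borel" by (subst measurable_cong_sets[OF mu(2) refl]) (rule em)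
  have enu: "e \<in> \<nu> \<rightarrow>\<^sub>M borel" by (subst measurable_cong_sets[OF nu(2) refl]) (rule em)
  interpret A: real_distribution "distr \<mu> borel e" using prob_space.real_distribution_distr[OF mu(1) emu] .
  interpret B: real_distribution "distr \<nu> borel e" using prob_space.real_distribution_distr[OF nu(1) enu] .
  have cq: "cdf (distr \<mu> borel e) q = cdf (distr \<nu> borel e) q" if "q \<in> \<rat>" for q
  proof -
    have spmu: "space \<mu> = space M" by (rule sets_eq_imp_space_eq[OF mu(2)])
    have spnu: "space \<nu> = space M" by (rule sets_eq_imp_space_eq[OF nu(2)])
    have s1: "e -` {..q} \<inter> space \<mu> = {a\<in>space M. e a \<le> q}" using spmu by auto
    have s2: "e -` {..q} \<inter> space \<nu> = {a\<in>space M. e a \<le> q}" using spnu by auto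
    have "cdf (distr \<mu> borel e) q = measure \<mu> (e -` {..q} \<inter> space \<mu>)"
      unfolding cdf_def by (rule measure_distr[OF emu]) simp
    also have "\<dots> = measure \<mu> {a\<in>space M. e a \<le> q}" by (simp only: s1)
    also have "\<dots> = measure \<nu> {a\<in>space M. e a \<le> q}"
    proof -
      have "emeasure \<mu> {a\<in>space M. e a \<le> q} = emeasure \<nu> {a\<in>space M. e a \<le> q}"
        using eq that by blast
      then show ?thesis unfolding measure_def by (rule arg_cong)
    qed
    also have "\<dots> = measure \<nu> (e -` {..q} \<inter> space \<nu>)" by (simp only: s2)
    also have "\<dots> = cdf (distr \<nu> borel e) q"
      unfolding cdf_def by (rule measure_distr[OF enu, symmetric]) simp
    finally show ?thesis .
  qed
  have "cdf (distr \<mu> borel e) = cdf (distr \<nu> borel e)"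
  proof
    fix t
    have "ereal (cdf (distr \<mu> borel e) t) = (INF q\<in>{q\<in>\<rat>. t < q}. ereal (cdf (distr \<mu> borel e) q))"
      by (rule cdf_rat_inf[symmetric]) (auto intro: A.cdf_nondecreasing A.cdf_is_right_cont)
    also have "\<dots> = (INF q\<in>{q\<in>\<rat>. t < q}. ereal (cdf (distr \<nu> borel e) q))"
      by (intro INF_cong) (auto simp: cq)
    also have "\<dots> = ereal (cdf (distr \<nu> borel e) t)"
      by (rule cdf_rat_inf) (auto intro: B.cdf_nondecreasing B.cdf_is_right_cont)
    finally show "cdf (distr \<mu> borel e) t = cdf (distr \<nu> borel e) t" by simp
  qed
  then have d: "distr \<mu> borel e = distr \<nu> borel e"
    by (rule cdf_unique[OF A.real_distribution_axioms B.real_distribution_axioms])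
  have bk: "distr (distr \<theta> borel e) M r = \<theta>" if th: "sets \<theta> = sets M" for \<theta>
  proof -
    have eth: "e \<in> \<theta> \<rightarrow>\<^sub>M borel" by (subst measurable_cong_sets[OF th refl]) (rule em)
    have "distr (distr \<theta> borel e) M r = distr \<theta> M (\<lambda>a. r (e a))"
      by (subst distr_distr[OF rm eth]) (simp add: comp_def)
    also have "\<dots> = distr \<theta> M (\<lambda>a. a)"
      by (rule distr_cong) (auto simp: re sets_eq_imp_space_eq[OF th])
    also have "\<dots> = \<theta>" by (rule distr_id2[OF th[symmetric]])
    finally show ?thesis .
  qed
  have "\<mu> = distr (distr \<mu> borel e) M r" by (rule bk[OF mu(2), symmetric])
  also have "\<dots> = distr (distr \<nu> borel e) M r" by (simp only: d)
  also have "\<dots> = \<nu>" by (rule bk[OF nu(2)])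
  finally show ?thesis .
qed

end


lemma approx_algebra:
  assumes fm: "finite_measure M" and alg: "algebra (space M) G" and sg: "sets M = sigma_sets (space M) G"
    and A: "A \<in> sets M" and \<epsilon>: "\<epsilon> > 0"
  shows "\<exists>C\<in>G. measure M ((A - C) \<union> (C - A)) < \<epsilon>"
proof -
  interpret finite_measure M by fact
  interpret G: algebra "space M" G by fact
  have GM: "G \<subseteq> sets M" using sg by auto
  have "\<forall>\<epsilon>>0. \<exists>C\<in>G. measure M ((A - C) \<union> (C - A)) < \<epsilon>" if "A \<in> sigma_sets (space M) G" for A
    using that
  proof (induction A rule: sigma_sets.induct)
    case (Basic a)
    then show ?case by (auto intro!: bexI[of _ a])
  next
    case Empty
    then show ?case by (auto intro!: bexI[of _ "{}"])
  next
    case (Compl a)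
    have a: "a \<in> sets M" using Compl.hyps sg by simp
    show ?case
    proof (intro allI impI)
      fix \<epsilon> :: real assume \<epsilon>: "\<epsilon> > 0"
      then obtain C where C: "C \<in> G" "measure M ((a - C) \<union> (C - a)) < \<epsilon>" using Compl.IH by blast
      have CM: "C \<in> sets M" using C GM by auto
      have "((space M - a) - (space M - C)) \<union> ((space M - C) - (space M - a)) \<subseteq> (a - C) \<union> (C - a)"
        by auto
      then have "measure M (((space M - a) - (space M - C)) \<union> ((space M - C) - (space M - a)))
          \<le> measure M ((a - C) \<union> (C - a))"
        using a CM by (intro finite_measure_mono) auto
      then show "\<exists>C'\<in>G. measure M (((space M - a) - C') \<union> (C' - (space M - a))) < \<epsilon>"
        using C by (intro bexI[of _ "space M - C"]) auto
    qed
  next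
    case (Union a)
    have aM: "a i \<in> sets M" for i using Union.hyps sg by simp
    show ?case
    proof (intro allI impI)
      fix \<epsilon> :: real assume \<epsilon>: "\<epsilon> > 0"
      define U where "U = (\<Union>i. a i)"
      define V where "V N = (\<Union>i<N. a i)" for N
      have VM: "V N \<in> sets M" for N unfolding V_def using aM by auto
      have UM: "U \<in> sets M" unfolding U_def using aM by auto
      have "(\<lambda>N. measure M (V N)) \<longlonglongrightarrow> measure M (\<Union>N. V N)"
      proof (rule finite_Lim_measure_incseq)
        show "range V \<subseteq> sets M" using VM by auto
        show "incseq V" unfolding incseq_def V_def by (force intro: UN_mono)
      qed
      moreover have "(\<Union>N. V N) = U" unfolding U_def V_def by auto
      ultimately have "(\<lambda>N. measure M (V N)) \<longlonglongrightarrow> measure M U" by simp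
      then obtain N where N: "\<bar>measure M (V N) - measure M U\<bar> < \<epsilon> / 2"
        using \<epsilon> unfolding LIMSEQ_def dist_real_def by (metis half_gt_zero le_refl)
      have VU: "V N \<subseteq> U" unfolding V_def U_def by auto
      have d1: "measure M (U - V N) < \<epsilon> / 2"
        using N VU by (simp add: finite_measure_Diff[OF UM VM] abs_if split: if_splits)
      define \<delta> where "\<delta> = \<epsilon> / (2 * real (Suc N))"
      have \<delta>: "\<delta> > 0" using \<epsilon> by (simp add: \<delta>_def)
      have "\<forall>i. \<exists>C\<in>G. measure M ((a i - C) \<union> (C - a i)) < \<delta>" using Union.IH \<delta> by blast
      then obtain c where c: "\<And>i. c i \<in> G" "\<And>i. measure M ((a i - c i) \<union> (c i - a i)) < \<delta>"
        by metis
      have cM: "c i \<in> sets M" for i using c GM by auto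
      define C where "C = (\<Union>i<N. c i)"
      have CG: "C \<in> G" unfolding C_def using c by auto
      have sub: "(U - C) \<union> (C - U) \<subseteq> (U - V N) \<union> (\<Union>i<N. (a i - c i) \<union> (c i - a i))"
        unfolding U_def C_def V_def by auto
      have "measure M ((U - C) \<union> (C - U)) \<le> measure M ((U - V N) \<union> (\<Union>i<N. (a i - c i) \<union> (c i - a i)))"
        using UM VM aM cM by (intro finite_measure_mono[OF sub]) auto
      also have "\<dots> \<le> measure M (U - V N) + measure M (\<Union>i<N. (a i - c i) \<union> (c i - a i))"
        using UM VM aM cM by (intro measure_Un_le) auto
      also have "measure M (\<Union>i<N. (a i - c i) \<union> (c i - a i)) \<le> (\<Sum>i<N. measure M ((a i - c i) \<union> (c i - a i)))"
        using aM cM by (intro measure_UNION_le) auto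
      also have "\<dots> \<le> (\<Sum>i<N. \<delta>)" using c(2) by (intro sum_mono) (simp add: less_imp_le)
      also have "(\<Sum>i<N. \<delta>) = real N * \<delta>" by simp
      also have "real N * \<delta> \<le> \<epsilon> / 2"
        using \<epsilon> by (simp add: \<delta>_def field_simps)
      finally have "measure M ((U - C) \<union> (C - U)) < \<epsilon>" using d1 by simp
      then show "\<exists>C\<in>G. measure M (((\<Union>i. a i) - C) \<union> (C - (\<Union>i. a i))) < \<epsilon>"
        using CG unfolding U_def by blast
    qed
  qed
  then show ?thesis using A \<epsilon> sg by auto
qed



lemma measure_symdiff:
  assumes "finite_measure M" "S \<in> sets M" "T \<in> sets M"
  shows "\<bar>measure M S - measure M T\<bar> \<le> measure M ((S - T) \<union> (T - S))"
proof -
  interpret finite_measure M by fact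
  have D: "(S - T) \<union> (T - S) \<in> sets M" using assms by auto
  have "measure M S \<le> measure M (T \<union> ((S - T) \<union> (T - S)))"
    using assms D by (intro finite_measure_mono) auto
  also have "\<dots> \<le> measure M T + measure M ((S - T) \<union> (T - S))"
    using assms D by (intro measure_Un_le) auto
  finally have 1: "measure M S \<le> measure M T + measure M ((S - T) \<union> (T - S))" .
  have "measure M T \<le> measure M (S \<union> ((S - T) \<union> (T - S)))"
    using assms D by (intro finite_measure_mono) auto
  also have "\<dots> \<le> measure M S + measure M ((S - T) \<union> (T - S))"
    using assms D by (intro measure_Un_le) auto
  finally have 2: "measure M T \<le> measure M S + measure M ((S - T) \<union> (T - S))" .
  show ?thesis using 1 2 by linarith
qed

lemma comp_perm_meas:
  "(\<lambda>x. x \<circ> (\<pi>::int\<Rightarrow>int)) \<in> PiM UNIV (\<lambda>_. \<theta>) \<rightarrow>\<^sub>M PiM UNIV (\<lambda>_. \<theta>)"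
proof -
  have "(\<lambda>x i. x (\<pi> i)) \<in> PiM UNIV (\<lambda>_. \<theta>) \<rightarrow>\<^sub>M PiM UNIV (\<lambda>_. \<theta>)"
  proof (rule measurable_PiM_single')
    fix i show "(\<lambda>x. x (\<pi> i)) \<in> PiM UNIV (\<lambda>_. \<theta>) \<rightarrow>\<^sub>M \<theta>"
      by (rule measurable_component_singleton) simp
    show "(\<lambda>x i. x (\<pi> i)) \<in> space (PiM UNIV (\<lambda>_. \<theta>)) \<rightarrow> (\<Pi>\<^sub>E i\<in>UNIV. space \<theta>)"
      by (auto simp: space_PiM)
  qed
  then show ?thesis by (simp add: comp_def)
qed

lemma perm_invariant:
  assumes th: "prob_space \<theta>" and \<pi>: "bij (\<pi>::int\<Rightarrow>int)" and S: "S \<in> sets (PiM UNIV (\<lambda>_. \<theta>))"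
  shows "measure (PiM UNIV (\<lambda>_. \<theta>)) ((\<lambda>x. x \<circ> \<pi>) -` S \<inter> space (PiM UNIV (\<lambda>_. \<theta>)))
      = measure (PiM UNIV (\<lambda>_. \<theta>)) S"
proof -
  let ?K = "PiM (UNIV::int set) (\<lambda>_. \<theta>)"
  have "distr ?K (\<Pi>\<^sub>M i\<in>UNIV. \<theta>) (\<lambda>\<omega>. \<lambda>n\<in>UNIV. \<omega> (\<pi> n)) = (\<Pi>\<^sub>M i\<in>UNIV. \<theta>)"
    using \<pi> th by (intro distr_PiM_reindex) (auto simp: bij_def)
  then have d: "distr ?K ?K (\<lambda>x. x \<circ> \<pi>) = ?K" by (simp add: restrict_UNIV comp_def)
  have "measure ?K S = measure (distr ?K ?K (\<lambda>x. x \<circ> \<pi>)) S" by (simp add: d)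
  also have "\<dots> = measure ?K ((\<lambda>x. x \<circ> \<pi>) -` S \<inter> space ?K)"
    by (rule measure_distr[OF comp_perm_meas S])
  finally show ?thesis ..
qed



lemma cyl_indep:
  assumes th: "prob_space \<theta>" and disj: "J \<inter> \<pi> ` J = {}"
    and X: "X \<in> sets (PiM J (\<lambda>_. \<theta>))"
  defines "C \<equiv> prod_emb UNIV (\<lambda>_. \<theta>) J X"
  shows "measure (PiM UNIV (\<lambda>_. \<theta>)) (C \<inter> ((\<lambda>x. x \<circ> (\<pi>::int\<Rightarrow>int)) -` C \<inter> space (PiM UNIV (\<lambda>_. \<theta>))))
    = measure (PiM UNIV (\<lambda>_. \<theta>)) C * measure (PiM UNIV (\<lambda>_. \<theta>)) ((\<lambda>x. x \<circ> \<pi>) -` C \<inter> space (PiM UNIV (\<lambda>_. \<theta>)))"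
proof -
  let ?K = "PiM (UNIV::int set) (\<lambda>_. \<theta>)"
  interpret P: prob_space ?K by (intro prob_space_PiM th)
  define Kf where "Kf b = (if b then J else \<pi> ` J)" for b :: bool
  have dj: "disjoint_family_on Kf UNIV"
    using disj unfolding disjoint_family_on_def Kf_def by auto
  have ind: "P.indep_vars (\<lambda>b. PiM (Kf b) (\<lambda>_. \<theta>)) (\<lambda>b \<omega>. restrict (\<lambda>i. \<omega> i) (Kf b)) UNIV"
    by (rule P.indep_vars_restrict[OF KK_indep[OF th] _ dj]) auto
  define g where "g y = (\<lambda>j\<in>J. y (\<pi> j))" for y :: "int \<Rightarrow> 'a"
  have gm: "g \<in> PiM (\<pi> ` J) (\<lambda>_. \<theta>) \<rightarrow>\<^sub>M PiM J (\<lambda>_. \<theta>)"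
    unfolding g_def by (rule measurable_restrict) (rule measurable_component_singleton, auto)
  define Y where "Y b = (if b then X else g -` X \<inter> space (PiM (\<pi> ` J) (\<lambda>_. \<theta>)))" for b
  have Y: "Y b \<in> sets (PiM (Kf b) (\<lambda>_. \<theta>))" for b
    using X measurable_sets[OF gm X] by (cases b) (auto simp: Y_def Kf_def)
  have eq: "P.prob (\<Inter>b\<in>UNIV. (\<lambda>\<omega>. restrict (\<lambda>i. \<omega> i) (Kf b)) -` Y b \<inter> space ?K)
     = (\<Prod>b\<in>UNIV. P.prob ((\<lambda>\<omega>. restrict (\<lambda>i. \<omega> i) (Kf b)) -` Y b \<inter> space ?K))"
    by (rule P.indep_varsD_finite[OF ind]) (auto simp: Y)
  have s1: "(\<lambda>\<omega>. restrict (\<lambda>i. \<omega> i) (Kf True)) -` Y True \<inter> space ?K = C"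
    by (simp add: C_def Kf_def Y_def prod_emb_def space_PiM)
  have s2: "(\<lambda>\<omega>. restrict (\<lambda>i. \<omega> i) (Kf False)) -` Y False \<inter> space ?K = (\<lambda>x. x \<circ> \<pi>) -` C \<inter> space ?K"
  proof -
    have key: "g (restrict x (\<pi> ` J)) = restrict (x \<circ> \<pi>) J" for x
      unfolding g_def by (auto simp: fun_eq_iff)
    have sp: "x \<in> space ?K \<Longrightarrow> restrict x (\<pi> ` J) \<in> space (PiM (\<pi> ` J) (\<lambda>_. \<theta>))" for x
      by (auto simp: space_PiM)
    have sp2: "x \<in> space ?K \<Longrightarrow> x \<circ> \<pi> \<in> (\<Pi>\<^sub>E i\<in>UNIV. space \<theta>)" for x
      by (auto simp: space_PiM)
    show ?thesis
      using sp sp2 by (auto simp: C_def Kf_def Y_def prod_emb_def key)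
  qed
  have "(\<Inter>b\<in>UNIV. (\<lambda>\<omega>. restrict (\<lambda>i. \<omega> i) (Kf b)) -` Y b \<inter> space ?K)
      = ((\<lambda>\<omega>. restrict (\<lambda>i. \<omega> i) (Kf True)) -` Y True \<inter> space ?K) \<inter>
        ((\<lambda>\<omega>. restrict (\<lambda>i. \<omega> i) (Kf False)) -` Y False \<inter> space ?K)"
    by (auto simp: UNIV_bool)
  then show ?thesis using eq s1 s2 by (simp add: UNIV_bool)
qed



lemma hewitt_savage:
  assumes th: "prob_space \<theta>" and A: "A \<in> sets (PiM UNIV (\<lambda>_::int. \<theta>))"
    and sym: "\<And>\<pi>. finite_perm \<pi> \<Longrightarrow> (\<lambda>x. x \<circ> \<pi>) -` A \<inter> space (PiM UNIV (\<lambda>_::int. \<theta>)) = A"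
  shows "measure (PiM UNIV (\<lambda>_::int. \<theta>)) A = 0 \<or> measure (PiM UNIV (\<lambda>_::int. \<theta>)) A = 1"
proof -
  let ?K = "PiM (UNIV::int set) (\<lambda>_. \<theta>)"
  interpret P: prob_space ?K by (intro prob_space_PiM th)
  interpret PP: product_prob_space "\<lambda>_::int. \<theta>" UNIV
    by (simp add: product_prob_space_def product_prob_space_axioms_def product_sigma_finite_def
        th prob_space_imp_sigma_finite)
  have fm: "finite_measure ?K" using P.prob_space_axioms unfolding prob_space_def by blast
  define a where "a = measure ?K A"
  have a01: "0 \<le> a" "a \<le> 1" unfolding a_def by auto
  have main: "\<bar>a - a * a\<bar> \<le> 4 * \<epsilon>" if \<epsilon>: "\<epsilon> > 0" for \<epsilon>
  proof -
    obtain C where C: "C \<in> PP.generator" and AC: "measure ?K ((A - C) \<union> (C - A)) < \<epsilon>"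
      using approx_algebra[OF fm PP.algebra_generator PP.sets_PiM_generator A \<epsilon>] by blast
    from C obtain J X where J: "finite J" and X: "X \<in> sets (PiM J (\<lambda>_. \<theta>))"
      and Ceq: "C = prod_emb UNIV (\<lambda>_. \<theta>) J X"
      by (cases rule: PP.generator.cases) auto
    have CM: "C \<in> sets ?K" unfolding Ceq using X by (intro measurable_prod_emb) auto
    define N where "N = (\<Sum>j\<in>J. nat \<bar>j\<bar>)"
    have JN: "\<bar>j\<bar> \<le> int N" if "j \<in> J" for j
    proof -
      have "nat \<bar>j\<bar> \<le> N" unfolding N_def using J that by (intro member_le_sum) auto
      then show ?thesis by linarith
    qed
    define s where "s = 2 * int N + 1"
    define \<pi> where "\<pi> k = (if \<bar>k\<bar> \<le> int N then k + s else if int N < k \<and> k \<le> 3 * int N + 1 then k - s else k)" for k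
    have inv: "\<pi> (\<pi> k) = k" for k unfolding \<pi>_def s_def by auto
    have bij: "bij \<pi>"
      by (rule bij_betwI[where g=\<pi>]) (auto simp: inv)
    have finS: "finite {k. \<pi> k \<noteq> k}"
      by (rule finite_subset[of _ "{- int N .. 3 * int N + 1}"]) (auto simp: \<pi>_def s_def split: if_splits)
    have fp: "finite_perm \<pi>" using bij finS by (simp add: finite_perm_def)
    have disj: "J \<inter> \<pi> ` J = {}"
    proof safe
      fix j j' assume j: "j \<in> J" and j': "j' \<in> J" and eq: "\<pi> j' \<in> J"
      have "\<pi> j' = j' + s" using JN[OF j'] by (simp add: \<pi>_def)
      then have "\<pi> j' > int N" using JN[OF j'] by (simp add: s_def)
      then show "\<pi> j' \<in> {}" using JN[OF eq] by simp
    qed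
    define C' where "C' = (\<lambda>x. x \<circ> \<pi>) -` C \<inter> space ?K"
    have C'M: "C' \<in> sets ?K" unfolding C'_def using measurable_sets[OF comp_perm_meas CM] .
    define c where "c = measure ?K C"
    have mC': "measure ?K C' = c" unfolding C'_def c_def by (rule perm_invariant[OF th bij CM])
    have mCC: "measure ?K (C \<inter> C') = c * c"
      using cyl_indep[OF th disj X] mC' unfolding C'_def c_def Ceq by simp
    have DM: "(A - C) \<union> (C - A) \<in> sets ?K" using A CM by auto
    have Aeq: "(\<lambda>x. x \<circ> \<pi>) -` A \<inter> space ?K = A" by (rule sym[OF fp])
    have "(A - C') \<union> (C' - A) = ((\<lambda>x. x \<circ> \<pi>) -` A \<inter> space ?K - C') \<union> (C' - (\<lambda>x. x \<circ> \<pi>) -` A \<inter> space ?K)"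
      by (simp only: Aeq)
    also have "\<dots> = (\<lambda>x. x \<circ> \<pi>) -` ((A - C) \<union> (C - A)) \<inter> space ?K"
      unfolding C'_def by auto
    finally have "measure ?K ((A - C') \<union> (C' - A)) = measure ?K ((A - C) \<union> (C - A))"
      using perm_invariant[OF th bij DM] by simp
    then have AC': "measure ?K ((A - C') \<union> (C' - A)) < \<epsilon>" using AC by simp
    have "measure ?K ((A - C \<inter> C') \<union> (C \<inter> C' - A)) \<le> measure ?K (((A - C) \<union> (C - A)) \<union> ((A - C') \<union> (C' - A)))"
      using A CM C'M by (intro P.finite_measure_mono) auto
    also have "\<dots> \<le> measure ?K ((A - C) \<union> (C - A)) + measure ?K ((A - C') \<union> (C' - A))"
      using A CM C'M by (intro measure_Un_le) auto
    finally have ACC: "measure ?K ((A - C \<inter> C') \<union> (C \<inter> C' - A)) < 2 * \<epsilon>" using AC AC' by simp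
    have d1: "\<bar>a - c\<bar> < \<epsilon>"
      using measure_symdiff[OF fm A CM] AC unfolding a_def c_def by simp
    have d2: "\<bar>a - c * c\<bar> < 2 * \<epsilon>"
      using measure_symdiff[OF fm A, of "C \<inter> C'"] CM C'M ACC mCC unfolding a_def by auto
    have c01: "0 \<le> c" "c \<le> 1" unfolding c_def by auto
    have "\<bar>c * c - a * a\<bar> = \<bar>c - a\<bar> * \<bar>c + a\<bar>" by (simp add: abs_mult[symmetric] algebra_simps)
    also have "\<dots> \<le> \<epsilon> * 2"
      using d1 a01 c01 by (intro mult_mono) auto
    finally have "\<bar>c * c - a * a\<bar> \<le> 2 * \<epsilon>" by simp
    then show ?thesis using d2 by linarith
  qed
  have "a - a * a = 0"
  proof -
    have "\<bar>a - a * a\<bar> \<le> 0"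
    proof (rule field_le_epsilon)
      fix \<epsilon> :: real assume "0 < \<epsilon>"
      then show "\<bar>a - a * a\<bar> \<le> 0 + \<epsilon>" using main[of "\<epsilon> / 4"] by simp
    qed
    then show ?thesis by simp
  qed
  then have "a * (1 - a) = 0" by (simp add: algebra_simps)
  then show ?thesis unfolding a_def[symmetric] by auto
qed



theorem mainTheorem11:
  fixes M :: "'a measure" and T :: "'a \<Rightarrow> 'a" and P :: "'a measure measure"
  assumes "standard_prob_space M"
    and "automorphism M T"
    and "P \<in> QF M T"
  shows "\<exists>\<phi>. \<phi> \<in> sigma (space (Zpow M)) (symmetric_sets M) \<rightarrow>\<^sub>M prob_algebra M
           \<and> \<phi> \<in> Zpow M \<rightarrow>\<^sub>M prob_algebra M
           \<and> distr (Pbar_inf M P) (prob_algebra M) \<phi> = P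
           \<and> (AE x in Pbar_inf M P. \<phi> (Tinf T x) = push M T (\<phi> x))
           \<and> (\<forall>A\<in>symmetric_sets M. \<exists>B\<in>sets (prob_algebra M).
                emeasure (Pbar_inf M P) ((A - \<phi> -` B) \<union> ((\<phi> -` B \<inter> space (Zpow M)) - A)) = 0)"
proof -
  obtain e :: "'a \<Rightarrow> real" and r :: "real \<Rightarrow> 'a" where er0: "e \<in> M \<rightarrow>\<^sub>M borel \<and> r \<in> borel \<rightarrow>\<^sub>M M \<and> (\<forall>a\<in>space M. r (e a) = a)
    \<and> (\<forall>a. 0 < e a) \<and> (\<forall>a. e a < 1)"
    using standard_encode[OF assms(1)] by iprover
  have er: "e \<in> M \<rightarrow>\<^sub>M borel" "r \<in> borel \<rightarrow>\<^sub>M M" "\<And>a. a \<in> space M \<Longrightarrow> r (e a) = a"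
    "\<And>a. 0 < e a" "\<And>a. e a < 1"
    using er0 by auto
  have pM: "prob_space M" using assms(1) by (simp add: standard_prob_space_def)
  interpret enc M e r by (rule enc.intro[OF pM er])
  have Tm: "T \<in> M \<rightarrow>\<^sub>M M" using assms(2) by (simp add: automorphism_def)
  have P: "prob_space P" "sets P = sets (prob_algebra M)" using assms(3) by (auto simp: QF_def)
  have spP: "space P = space (prob_algebra M)" using P(2) by (rule sets_eq_imp_space_eq)
  have neP: "space P \<noteq> {}" using prob_space.not_empty[OF P(1)] .
  have Pbar: "Pbar_inf M P = P \<bind> KK" by (rule Pbar_bind[OF P])
  have KKP: "KK \<in> P \<rightarrow>\<^sub>M prob_algebra (Zpow M)"
    using KK_measurable measurable_cong_sets[OF P(2) refl] by blast
  have KKPs: "KK \<in> P \<rightarrow>\<^sub>M subprob_algebra (Zpow M)" by (rule measurable_prob_algebraD[OF KKP])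
  have th_facts: "prob_space \<theta>" "sets \<theta> = sets M" if "\<theta> \<in> space (prob_algebra M)" for \<theta>
    using that by (auto simp: space_prob_algebra)
  have phiK: "phi \<in> KK \<theta> \<rightarrow>\<^sub>M prob_algebra M" if "\<theta> \<in> space (prob_algebra M)" for \<theta>
    by (subst measurable_cong_sets[OF KK_sets[OF th_facts(2)[OF that]] refl]) (rule phi_meas)
  have spPbar: "space (Pbar_inf M P) = space (Zpow M)"
    unfolding Pbar
  proof (rule space_bind[OF _ neP])
    fix x assume "x \<in> space P"
    then have "sets x = sets M" using spP by (simp add: space_prob_algebra)
    then show "sets (KK x) = sets (Zpow M)" by (rule KK_sets)
  qed
  have distr_eq: "distr (Pbar_inf M P) (prob_algebra M) phi = P"
  proof -
    have "distr (Pbar_inf M P) (prob_algebra M) phi = P \<bind> (\<lambda>\<theta>. distr (KK \<theta>) (prob_algebra M) phi)"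
      unfolding Pbar by (rule distr_bind[OF KKPs neP phi_meas])
    also have "\<dots> = P \<bind> return (prob_algebra M)"
    proof (rule bind_cong[OF refl])
      fix \<theta> assume "\<theta> \<in> space P"
      then have \<theta>: "\<theta> \<in> space (prob_algebra M)" using spP by simp
      interpret K: prob_space "KK \<theta>" by (rule KK_prob[OF th_facts(1)[OF \<theta>]])
      have "distr (KK \<theta>) (prob_algebra M) phi = distr (KK \<theta>) (prob_algebra M) (\<lambda>_. \<theta>)"
        by (rule distr_cong_AE[OF refl refl phi_AE[OF \<theta>] phiK[OF \<theta>]]) (simp add: \<theta>)
      also have "\<dots> = return (prob_algebra M) \<theta>" by (rule K.distr_const[OF \<theta>])
      finally show "distr (KK \<theta>) (prob_algebra M) phi = return (prob_algebra M) \<theta>" .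
    qed
    also have "\<dots> = P" by (rule bind_return''[OF P(2)])
    finally show ?thesis .
  qed
  define Aq where "Aq q = {a\<in>space M. e a \<le> q}" for q
  have AqM: "Aq q \<in> sets M" for q unfolding Aq_def by measurable
  have pushm: "push M T \<in> prob_algebra M \<rightarrow>\<^sub>M prob_algebra M"
    unfolding push_def[abs_def] by (rule measurable_distr_prob_space[OF Tm])
  have f1: "(\<lambda>x. emeasure (phi (Tinf T x)) (Aq q)) \<in> borel_measurable (Zpow M)" for q
    by (rule measurable_compose[OF measurable_compose[OF Tinf_meas[OF Tm] phi_meas] meas_emeasure_prob_algebra[OF AqM]])
  have f2: "(\<lambda>x. emeasure (push M T (phi x)) (Aq q)) \<in> borel_measurable (Zpow M)" for q
    by (rule measurable_compose[OF measurable_compose[OF phi_meas pushm] meas_emeasure_prob_algebra[OF AqM]])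
  have predD: "Measurable.pred (Zpow M) (\<lambda>x. \<forall>q\<in>\<rat>. emeasure (phi (Tinf T x)) (Aq q) = emeasure (push M T (phi x)) (Aq q))"
  proof -
    have eqs: "{x\<in>space (Zpow M). \<forall>q\<in>\<rat>. emeasure (phi (Tinf T x)) (Aq q) = emeasure (push M T (phi x)) (Aq q)}
      = (\<Inter>q\<in>\<rat>. {x\<in>space (Zpow M). emeasure (phi (Tinf T x)) (Aq q) = emeasure (push M T (phi x)) (Aq q)})"
      using Rats_0 by blast
    have "(\<Inter>q\<in>\<rat>. {x\<in>space (Zpow M). emeasure (phi (Tinf T x)) (Aq q) = emeasure (push M T (phi x)) (Aq q)}) \<in> sets (Zpow M)"
    proof (rule sets.countable_INT')
      show "countable \<rat>" by (rule countable_rat)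
      show "\<rat> \<noteq> {}" using Rats_0 by blast
      show "(\<lambda>q. {x\<in>space (Zpow M). emeasure (phi (Tinf T x)) (Aq q) = emeasure (push M T (phi x)) (Aq q)}) ` \<rat> \<subseteq> sets (Zpow M)"
        using borel_measurable_eq[OF f1 f2] by blast
    qed
    then show ?thesis unfolding pred_def eqs .
  qed
  have AEeq: "AE x in Pbar_inf M P. phi (Tinf T x) = push M T (phi x)"
  proof -
    have "AE x in P \<bind> KK. \<forall>q\<in>\<rat>. emeasure (phi (Tinf T x)) (Aq q) = emeasure (push M T (phi x)) (Aq q)"
    proof (subst AE_bind[OF KKPs predD], rule AE_I2)
      fix \<theta> assume "\<theta> \<in> space P"
      then have \<theta>: "\<theta> \<in> space (prob_algebra M)" using spP by simp
      have p\<theta>: "push M T \<theta> \<in> space (prob_algebra M)" using measurable_space[OF pushm \<theta>] .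
      have TK: "Tinf T \<in> KK \<theta> \<rightarrow>\<^sub>M Zpow M"
        by (subst measurable_cong_sets[OF KK_sets[OF th_facts(2)[OF \<theta>]] refl]) (rule Tinf_meas[OF Tm])
      have "AE y in distr (KK \<theta>) (Zpow M) (Tinf T). phi y = push M T \<theta>"
        unfolding distr_KK_Tinf[OF Tm \<theta>] by (rule phi_AE[OF p\<theta>])
      then have 1: "AE x in KK \<theta>. phi (Tinf T x) = push M T \<theta>" by (rule AE_distrD[OF TK])
      show "AE x in KK \<theta>. \<forall>q\<in>\<rat>. emeasure (phi (Tinf T x)) (Aq q) = emeasure (push M T (phi x)) (Aq q)"
        using 1 phi_AE[OF \<theta>] by eventually_elim simp
    qed
    then have "AE x in Pbar_inf M P. \<forall>q\<in>\<rat>. emeasure (phi (Tinf T x)) (Aq q) = emeasure (push M T (phi x)) (Aq q)"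
      unfolding Pbar .
    moreover have "AE x in Pbar_inf M P. (\<forall>q\<in>\<rat>. emeasure (phi (Tinf T x)) (Aq q) = emeasure (push M T (phi x)) (Aq q))
        \<longrightarrow> phi (Tinf T x) = push M T (phi x)"
    proof (rule AE_I2, intro impI)
      fix x assume x: "x \<in> space (Pbar_inf M P)"
        and h: "\<forall>q\<in>\<rat>. emeasure (phi (Tinf T x)) (Aq q) = emeasure (push M T (phi x)) (Aq q)"
      have xs: "x \<in> space (Zpow M)" using x spPbar by simp
      show "phi (Tinf T x) = push M T (phi x)"
      proof (rule measure_eq_rat)
        show "phi (Tinf T x) \<in> space (prob_algebra M)"
          using measurable_space[OF Tinf_meas[OF Tm] xs] measurable_space[OF phi_meas] by blast
        show "push M T (phi x) \<in> space (prob_algebra M)"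
          using measurable_space[OF pushm] measurable_space[OF phi_meas xs] by blast
        show "\<forall>q\<in>\<rat>. emeasure (phi (Tinf T x)) {a \<in> space M. e a \<le> q} = emeasure (push M T (phi x)) {a \<in> space M. e a \<le> q}"
          using h by (simp add: Aq_def)
      qed
    qed
    ultimately show ?thesis by (rule AE_mp)
  qed
  have symm: "\<exists>B\<in>sets (prob_algebra M).
      emeasure (Pbar_inf M P) ((A - phi -` B) \<union> ((phi -` B \<inter> space (Zpow M)) - A)) = 0"
    if A: "A \<in> symmetric_sets M" for A
  proof -
    have AZ: "A \<in> sets (Zpow M)" and Asym: "\<And>\<pi>. finite_perm \<pi> \<Longrightarrow> (\<lambda>x. x \<circ> \<pi>) -` A \<inter> space (Zpow M) = A"
      using A by (auto simp: symmetric_sets_def)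
    define B where "B = {\<theta>\<in>space (prob_algebra M). emeasure (KK \<theta>) A = 1}"
    have em: "(\<lambda>\<theta>. emeasure (KK \<theta>) A) \<in> borel_measurable (prob_algebra M)"
      by (rule measurable_compose[OF KK_measurable meas_emeasure_prob_algebra[OF AZ]])
    have BM: "B \<in> sets (prob_algebra M)" unfolding B_def using em by measurable
    define S where "S = (A - phi -` B) \<union> ((phi -` B \<inter> space (Zpow M)) - A)"
    have SM: "S \<in> sets (Zpow M)"
    proof -
      have pb: "phi -` B \<inter> space (Zpow M) \<in> sets (Zpow M)" by (rule measurable_sets[OF phi_meas BM])
      have "A - phi -` B = A - (phi -` B \<inter> space (Zpow M))" using sets.sets_into_space[OF AZ] by blast
      then show ?thesis unfolding S_def using AZ pb by (metis sets.Diff sets.Un)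
    qed
    have "emeasure (Pbar_inf M P) S = (\<integral>\<^sup>+\<theta>. emeasure (KK \<theta>) S \<partial>P)"
      unfolding Pbar using P(1) spP SM KKP
      by (intro emeasure_bind_prob_algebra) (auto simp: space_prob_algebra)
    also have "\<dots> = (\<integral>\<^sup>+\<theta>. 0 \<partial>P)"
    proof (rule nn_integral_cong)
      fix \<theta> assume "\<theta> \<in> space P"
      then have \<theta>: "\<theta> \<in> space (prob_algebra M)" using spP by simp
      note th = th_facts[OF \<theta>]
      interpret K: prob_space "KK \<theta>" by (rule KK_prob[OF th(1)])
      have sK: "sets (KK \<theta>) = sets (Zpow M)" by (rule KK_sets[OF th(2)])
      have spK: "space (KK \<theta>) = space (Zpow M)" by (rule KK_space[OF th(2)])
      have AK: "A \<in> sets (KK \<theta>)" using AZ sK by simp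
      have SK: "S \<in> sets (KK \<theta>)" using SM sK by simp
      have hs: "measure (KK \<theta>) A = 0 \<or> measure (KK \<theta>) A = 1"
        by (rule hewitt_savage[OF th(1) AK]) (simp add: spK Asym)
      have "AE x in KK \<theta>. x \<notin> S"
      proof (cases "\<theta> \<in> B")
        case True
        then have "measure (KK \<theta>) A = 1" by (simp add: B_def K.emeasure_eq_measure)
        then have "AE x in KK \<theta>. x \<in> A" using K.AE_in_set_eq_1[OF AK] by simp
        then show ?thesis using phi_AE[OF \<theta>]
        proof eventually_elim
          case (elim x) then show ?case using True by (auto simp: S_def)
        qed
      next
        case False
        then have "measure (KK \<theta>) A \<noteq> 1" using \<theta> by (simp add: B_def K.emeasure_eq_measure)
        then have "measure (KK \<theta>) A = 0" using hs by simp
        then have "A \<in> null_sets (KK \<theta>)" using AK by (simp add: K.emeasure_eq_measure null_sets_def)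
        then have "AE x in KK \<theta>. x \<notin> A" by (rule AE_not_in)
        then show ?thesis using phi_AE[OF \<theta>]
        proof eventually_elim
          case (elim x) then show ?case using False by (auto simp: S_def)
        qed
      qed
      then have "emeasure (KK \<theta>) S = 0"
        using AE_iff_measurable[OF SK, of "\<lambda>x. x \<notin> S"] SK[THEN sets.sets_into_space] by auto
      then show "emeasure (KK \<theta>) S = 0" .
    qed
    also have "\<dots> = 0" by simp
    finally show ?thesis using BM unfolding S_def by blast
  qed
  show ?thesis
    by (intro exI[of _ phi] conjI phi_sym_meas phi_meas distr_eq AEeq ballI symm)
qed


end
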